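(* Let $r\ge 3$ and $n \ge \frac{(r-1)(2r+1)}{2}$ be integers. If $\mathcal{H}$ is an $n$-vertex $r$-graph that is $\mathrm{T}_r$-free and satisfies $\delta_{r-1}^{+}(\mathcal{H}) > \frac{2n}{2r+1}$, then $\mathcal{H}$ is $r$-partite.
   Context: An $r$-graph $\mathcal{H}$ is a collection of $r$-subsets (edges) of a finite vertex set $V(\mathcal{H})$. The shadow is $\partial\mathcal{H}=\{e\in\binom{V(\mathcal{H})}{r-1}\colon e\subseteq E \text{ for some } E\in\mathcal{H}\}$. For $e\in\partial\mathcal{H}$, $N_{\mathcal{H}}(e)=\{v\in V(\mathcal{H})\colon e\cup\{v\}\in\mathcal{H}\}$. The minimum positive codegree is $\delta_{r-1}^{+}(\mathcal{H})=\min\{|N_{\mathcal{H}}(e)|\colon e\in\partial\mathcal{H}\}$. The $r$-uniform generalized triangle is $\mathrm{T}_r=\{\{1,\ldots,r-1,r\},\{1,\ldots,r-1,r+1\},\{r,r+1,\ldots,2r-1\}\}$; $\mathcal{H}$ is $\mathrm{T}_r$-free if it contains no subhypergraph isomorphic to $\mathrm{T}_r$. $\mathcal{H}$ is $r$-partite if $V(\mathcal{H})$ can be partitioned into $r$ parts $V_1,\dots,V_r$ such that every edge contains exactly one vertex from each part. *)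

theory Defs
  imports Complex_Main
begin

definition r_graph :: "nat \<Rightarrow> 'a set \<Rightarrow> 'a set set \<Rightarrow> bool" where
  "r_graph r V H \<longleftrightarrow> finite V \<and> (\<forall>E\<in>H. E \<subseteq> V \<and> card E = r)"

definition shadow :: "nat \<Rightarrow> 'a set set \<Rightarrow> 'a set set" where
  "shadow r H = {e. card e = r - 1 \<and> (\<exists>E\<in>H. e \<subseteq> E)}"

definition nbhd :: "'a set \<Rightarrow> 'a set set \<Rightarrow> 'a set \<Rightarrow> 'a set" where
  "nbhd V H e = {v \<in> V. insert v e \<in> H}"

definition min_pos_codeg :: "nat \<Rightarrow> 'a set \<Rightarrow> 'a set set \<Rightarrow> nat" where
  "min_pos_codeg r V H = Min ((\<lambda>e. card (nbhd V H e)) ` shadow r H)"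

definition gen_triangle :: "nat \<Rightarrow> nat set set" where
  "gen_triangle r = {{1..r}, insert (r+1) {1..r-1}, {r..2*r-1}}"

definition T_free :: "nat \<Rightarrow> 'a set set \<Rightarrow> bool" where
  "T_free r H \<longleftrightarrow> \<not> (\<exists>\<phi> :: nat \<Rightarrow> 'a. inj_on \<phi> {1..2*r-1} \<and>
                          (\<forall>F\<in>gen_triangle r. \<phi> ` F \<in> H))"

definition r_partite :: "nat \<Rightarrow> 'a set \<Rightarrow> 'a set set \<Rightarrow> bool" where
  "r_partite r V H \<longleftrightarrow> (\<exists>P :: 'a \<Rightarrow> nat. (\<forall>v\<in>V. P v < r) \<and>
       (\<forall>E\<in>H. \<forall>i<r. card {v\<in>E. P v = i} = 1))"

end

theory Submission imports Defs begin

locale tset =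
  fixes r n :: nat and V :: "'a set" and H :: "'a set set" and d :: nat
  assumes r3: "r \<ge> 3" and finV: "finite V" and edges: "\<And>E. E\<in>H \<Longrightarrow> E \<subseteq> V \<and> card E = r"
  and cardV: "card V = n" and Tf: "T_free r H"
  and codeg: "\<And>e. e\<in>shadow r H \<Longrightarrow> card (nbhd V H e) \<ge> d"
  and dr: "d \<ge> r" and d2: "(2*r+1)*d > 2*n"
begin

abbreviation "N \<equiv> nbhd V H"
abbreviation "sh \<equiv> shadow r H"

lemma finE: "E \<in> H \<Longrightarrow> finite E"
  using edges r3 by (metis card.infinite not_numeral_le_zero)

lemma N_iff: "v \<in> N e \<longleftrightarrow> v \<in> V \<and> insert v e \<in> H"
  by (simp add: nbhd_def)

lemma N_sub: "N e \<subseteq> V" by (auto simp: nbhd_def)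

lemma sh_card: "e \<in> sh \<Longrightarrow> card e = r - 1 \<and> finite e"
  using r3 by (auto simp: shadow_def intro: card_ge_0_finite)

lemma N_notin: "e \<in> sh \<Longrightarrow> v \<in> N e \<Longrightarrow> v \<notin> e"
proof
  assume "e \<in> sh" "v \<in> N e" "v \<in> e"
  then have "insert v e = e" "insert v e \<in> H" by (auto simp: N_iff)
  then have "card e = r" using edges by metis
  moreover have "card e = r - 1" using sh_card[OF \<open>e \<in> sh\<close>] by simp
  ultimately show False using r3 by linarith
qed

lemma sh_of: "E \<in> H \<Longrightarrow> x \<in> E \<Longrightarrow> E - {x} \<in> sh"
  using edges[of E] finE[of E] by (auto simp: shadow_def)

lemma in_N: "E \<in> H \<Longrightarrow> x \<in> E \<Longrightarrow> x \<in> N (E - {x})"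
  using edges[of E] by (auto simp: N_iff insert_absorb)

lemma ins_sh: "e \<in> sh \<Longrightarrow> v \<in> N e \<Longrightarrow> insert v e \<in> H"
  by (simp add: N_iff)

lemma T_embed:
  assumes "e \<inter> F = {}" "e \<in> sh" "F \<in> H" "insert u e \<in> H" "insert v e \<in> H"
    "u \<in> F" "v \<in> F" "u \<noteq> v"
  shows False
proof -
  have ce: "card e = r - 1" "finite e" using sh_card assms(2) by auto
  have cF: "card F = r" "finite F" using edges finE assms(3) by auto
  have "card {1..r-1} = card e" using ce by simp
  then obtain \<alpha> where al: "bij_betw \<alpha> {1..r-1} e" using finite_same_card_bij ce by blast
  have "card (F - {u,v}) = r - 2" using cF assms(6,7,8) by (simp add: card_Diff_subset)
  moreover have "card {r+2..2*r-1} = r - 2" using r3 by simp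
  ultimately obtain \<beta> where be: "bij_betw \<beta> {r+2..2*r-1} (F - {u,v})"
    using finite_same_card_bij cF by (metis finite_Diff finite_atLeastAtMost)
  define \<phi> where "\<phi> i = (if i \<le> r - 1 then \<alpha> i else if i = r then u else if i = r+1 then v else \<beta> i)" for i
  have "\<phi> ` {1..r-1} = \<alpha> ` {1..r-1}" by (rule image_cong) (auto simp: \<phi>_def)
  then have p1: "\<phi> ` {1..r-1} = e" using al unfolding bij_betw_def by simp
  have "\<phi> ` {r+2..2*r-1} = \<beta> ` {r+2..2*r-1}" by (rule image_cong) (auto simp: \<phi>_def)
  then have p4: "\<phi> ` {r+2..2*r-1} = F - {u,v}" using be unfolding bij_betw_def by simp
  have s1: "{1..r} = insert r {1..r-1}" using r3 by auto
  have s3: "{r..2*r-1} = insert r (insert (r+1) {r+2..2*r-1})" using r3 by auto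
  have i1: "\<phi> r = u" "\<phi> (r+1) = v" using r3 by (auto simp: \<phi>_def)
  have g1: "\<phi> ` {1..r} = insert u e" using s1 p1 i1 by simp
  have g2: "\<phi> ` insert (r+1) {1..r-1} = insert v e" using p1 i1 by simp
  have g3: "\<phi> ` {r..2*r-1} = F" using s3 p4 i1 assms(6,7) by auto
  have inj1: "inj_on \<phi> {1..r-1}"
    using al unfolding bij_betw_def inj_on_def \<phi>_def by auto
  have inj4: "inj_on \<phi> {r+2..2*r-1}"
    using be unfolding bij_betw_def inj_on_def \<phi>_def by auto
  have dom: "{1..2*r-1} = {1..r-1} \<union> {r+2..2*r-1} \<union> {r, r+1}" using r3 by auto
  have d14: "\<phi> ` ({1..r - 1} - {r + 2..2 * r - 1}) \<inter> \<phi> ` ({r + 2..2 * r - 1} - {1..r - 1}) = {}"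
    using p1 p4 assms(1) by blast
  have j14: "inj_on \<phi> ({1..r - 1} \<union> {r + 2..2 * r - 1})"
    using inj1 inj4 d14 inj_on_Un by blast
  have j2: "inj_on \<phi> {r, r + 1}" using i1 assms(8) by (auto simp: inj_on_def)
  have "\<phi> ` ({r, r + 1} - ({1..r - 1} \<union> {r + 2..2 * r - 1})) \<subseteq> {u,v}" using i1 by auto
  moreover have "\<phi> ` ({1..r - 1} \<union> {r + 2..2 * r - 1} - {r, r + 1}) \<subseteq> e \<union> (F - {u,v})"
    using p1 p4 by blast
  moreover have "u \<notin> e" "v \<notin> e" using assms(1,6,7) by auto
  ultimately have d3: "\<phi> ` ({1..r - 1} \<union> {r + 2..2 * r - 1} - {r, r + 1}) \<inter> \<phi> ` ({r, r + 1} - ({1..r - 1} \<union> {r + 2..2 * r - 1})) = {}"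
    by blast
  have "inj_on \<phi> {1..2*r-1}"
    unfolding dom using j14 j2 d3 inj_on_Un by blast
  then show False using Tf g1 g2 g3 assms(3,4,5) unfolding T_free_def gen_triangle_def by auto
qed

lemma indep_aux:
  "\<forall>F. card (F \<inter> e) = k \<longrightarrow> F \<in> H \<longrightarrow> u \<in> F \<longrightarrow> v \<in> F \<longrightarrow> e \<in> sh \<longrightarrow> u \<in> N e
     \<longrightarrow> v \<in> N e \<longrightarrow> u \<noteq> v \<longrightarrow> False"
proof (induction k)
  case 0
  show ?case
  proof (intro allI impI)
    fix F assume a: "card (F \<inter> e) = 0" "F \<in> H" "u \<in> F" "v \<in> F" "e \<in> sh" "u \<in> N e" "v \<in> N e" "u \<noteq> v"
    have "e \<inter> F = {}" using a(1) finE[OF a(2)] by auto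
    then show False using T_embed[of e F u v] a by (auto simp: N_iff)
  qed
next
  case (Suc k)
  show ?case
  proof (intro allI impI)
    fix F assume a: "card (F \<inter> e) = Suc k" "F \<in> H" "u \<in> F" "v \<in> F" "e \<in> sh" "u \<in> N e" "v \<in> N e" "u \<noteq> v"
    obtain x where x: "x \<in> F \<inter> e" using a(1) by (metis card.empty ex_in_conv nat.distinct(1))
    have hs: "F - {x} \<in> sh" using sh_of a(2) x by auto
    have "\<not> N (F - {x}) \<subseteq> e"
    proof
      assume "N (F - {x}) \<subseteq> e"
      then have "card (N (F - {x})) \<le> card e" using sh_card[OF a(5)] card_mono by metis
      then show False using codeg[OF hs] dr sh_card[OF a(5)] r3 by linarith
    qed
    then obtain y where y: "y \<in> N (F - {x})" "y \<notin> e" by blast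
    define F' where "F' = insert y (F - {x})"
    have F'H: "F' \<in> H" using y F'_def by (simp add: N_iff)
    have "u \<notin> e" "v \<notin> e" using N_notin a by auto
    then have uv: "u \<in> F'" "v \<in> F'" using a x F'_def by auto
    have "F' \<inter> e = (F \<inter> e) - {x}" using y x F'_def by auto
    then have "card (F' \<inter> e) = k" using a(1) x finE[OF a(2)] by simp
    then show False using Suc.IH F'H uv a by blast
  qed
qed

lemma indep: "e \<in> sh \<Longrightarrow> u \<in> N e \<Longrightarrow> v \<in> N e \<Longrightarrow> F \<in> H \<Longrightarrow> u \<in> F \<Longrightarrow> v \<in> F \<Longrightarrow> u = v"
  using indep_aux by blast

lemma N_disj: "E \<in> H \<Longrightarrow> x \<in> E \<Longrightarrow> y \<in> E \<Longrightarrow> x \<noteq> y \<Longrightarrow> N (E - {x}) \<inter> N (E - {y}) = {}"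
proof (rule ccontr)
  assume a: "E \<in> H" "x \<in> E" "y \<in> E" "x \<noteq> y" "N (E - {x}) \<inter> N (E - {y}) \<noteq> {}"
  then obtain w where w: "w \<in> N (E - {x})" "w \<in> N (E - {y})" by blast
  have "w \<notin> E - {x}" "w \<notin> E - {y}" using N_notin sh_of a w by blast+
  then have wE: "w \<notin> E" using a by blast
  have "insert w (E - {x}) \<in> H" using w by (simp add: N_iff)
  moreover have "y \<in> N (E - {y})" using in_N a by blast
  ultimately have "y = w" using indep[OF sh_of[OF a(1) a(3)] _ w(2)] a by blast
  then show False using wE a by blast
qed

lemma bigU: "G \<in> H \<Longrightarrow> card (\<Union>g\<in>G. N (G - {g})) \<ge> r * d"
proof -
  assume G: "G \<in> H"
  have "card (\<Union>g\<in>G. N (G - {g})) = (\<Sum>g\<in>G. card (N (G - {g})))"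
    by (rule card_UN_disjoint) (use finE[OF G] N_disj[OF G] finite_subset[OF N_sub finV] in auto)
  also have "\<dots> \<ge> card G * d" using sum_bounded_below[of G d "\<lambda>g. card (N (G - {g}))"]
      codeg sh_of[OF G] by auto
  finally show ?thesis using edges[OF G] by simp
qed

lemma KL:
  assumes "e1 \<in> sh" "e2 \<in> sh" "z \<in> N e1" "z \<in> N e2" "F \<in> H" "a \<in> F" "b \<in> F"
    "a \<in> N e1" "b \<in> N e2" "a \<noteq> b"
  shows False
proof -
  define G where "G = insert z e1"
  have GH: "G \<in> H" using assms(3) G_def by (simp add: N_iff)
  have zG: "z \<in> G" "G - {z} = e1" using G_def N_notin assms(1,3) by auto
  define S1 where "S1 = (\<Union>f\<in>F. N (F - {f}))"
  define S2 where "S2 = (\<Union>g\<in>G. N (G - {g}))"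
  define B where "B = N e2"
  have c1: "card S1 \<ge> r * d" using bigU[OF assms(5)] S1_def by simp
  have c2: "card S2 \<ge> r * d" using bigU[OF GH] S2_def by simp
  have cB: "card B \<ge> d" using codeg[OF assms(2)] B_def by simp
  have sub: "S1 \<subseteq> V" "S2 \<subseteq> V" "B \<subseteq> V" using N_sub S1_def S2_def B_def by auto
  have fin: "finite S1" "finite S2" "finite B" using sub finV finite_subset by metis+
  have disj: "B \<inter> S1 \<inter> S2 = {}"
  proof (rule ccontr)
    assume "B \<inter> S1 \<inter> S2 \<noteq> {}"
    then obtain w where w: "w \<in> B" "w \<in> S1" "w \<in> S2" by blast
    obtain f where f: "f \<in> F" "w \<in> N (F - {f})" using w S1_def by blast
    obtain g where g: "g \<in> G" "w \<in> N (G - {g})" using w S2_def by blast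
    have wnf: "w \<notin> F - {f}" using N_notin sh_of assms(5) f by blast
    have wng: "w \<notin> G - {g}" using N_notin sh_of GH g by blast
    have "insert w (F - {f}) \<in> H" using f by (simp add: N_iff)
    then have fb: "f = b"
      using indep[OF assms(2) assms(9), of w "insert w (F - {f})"] w(1) B_def wnf assms(7) by blast
    have "insert w (G - {g}) \<in> H" using g by (simp add: N_iff)
    then have gz: "g = z"
      using indep[OF assms(2) assms(4), of w "insert w (G - {g})"] w(1) B_def wng zG(1) by blast
    have wN1: "w \<in> N e1" using g gz zG by simp
    have "insert w (F - {b}) \<in> H" using f fb by (simp add: N_iff)
    then have "a = w" using indep[OF assms(1) assms(8) wN1] assms(6,10) by blast
    then show False using wnf fb assms(6,10) by blast
  qed
  have "card S1 + card S2 = card (S1 \<union> S2) + card (S1 \<inter> S2)" using fin card_Un_Int by blast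
  moreover have "card (S1 \<inter> S2) + card B = card ((S1 \<inter> S2) \<union> B)"
    using fin disj by (subst card_Un_disjoint) auto
  moreover have "card (S1 \<union> S2) \<le> n" "card ((S1 \<inter> S2) \<union> B) \<le> n"
    using sub finV cardV by (auto intro!: card_mono)
  ultimately have "2 * (r * d) + d \<le> 2 * n" using c1 c2 cB by linarith
  then show False using d2 by (simp add: algebra_simps)
qed

end

locale tset2 = tset +
  fixes E assumes EH: "E \<in> H"
begin

abbreviation "NE x \<equiv> N (E - {x})"

lemma exists_meet: "e \<in> sh \<Longrightarrow> \<exists>x\<in>E. N e \<inter> NE x \<noteq> {}"
proof (rule ccontr)
  assume e: "e \<in> sh" and "\<not> (\<exists>x\<in>E. N e \<inter> NE x \<noteq> {})"
  then have dj: "N e \<inter> (\<Union>x\<in>E. NE x) = {}" by blast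
  have sub: "N e \<union> (\<Union>x\<in>E. NE x) \<subseteq> V" using N_sub by blast
  have fin: "finite (N e)" "finite (\<Union>x\<in>E. NE x)"
    using finite_subset[OF sub finV] by auto
  have "card (N e) + card (\<Union>x\<in>E. NE x) = card (N e \<union> (\<Union>x\<in>E. NE x))"
    using fin dj by (simp add: card_Un_disjoint)
  also have "\<dots> \<le> n" using card_mono[OF finV sub] cardV by simp
  finally have "d + r * d \<le> n" using codeg[OF e] bigU[OF EH] by linarith
  then show False using d2 by (simp add: algebra_simps)
qed

lemma uniq_meet: "e \<in> sh \<Longrightarrow> x \<in> E \<Longrightarrow> y \<in> E \<Longrightarrow> N e \<inter> NE x \<noteq> {} \<Longrightarrow> N e \<inter> NE y \<noteq> {} \<Longrightarrow> x = y"
proof (rule ccontr)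
  assume a: "e \<in> sh" "x \<in> E" "y \<in> E" "N e \<inter> NE x \<noteq> {}" "N e \<inter> NE y \<noteq> {}" "x \<noteq> y"
  obtain p where p: "p \<in> N e" "p \<in> NE x" using a by blast
  obtain q where q: "q \<in> N e" "q \<in> NE y" using a by blast
  have qn: "q \<notin> E - {y}" using N_notin sh_of EH a(3) q(2) by blast
  have F: "insert q (E - {y}) \<in> H" using q(2) by (simp add: N_iff)
  have xF: "x \<in> insert q (E - {y})" using a by blast
  have xq: "x \<noteq> q" using qn a by blast
  show False
    using KL[OF sh_of[OF EH a(2)] a(1) p(2) p(1) F xF _ in_N[OF EH a(2)] q(1) xq] by blast
qed

lemma claimD: "G \<in> H \<Longrightarrow> g1 \<in> G \<Longrightarrow> g2 \<in> G \<Longrightarrow> x \<in> E \<Longrightarrow> N (G - {g1}) \<inter> NE x \<noteq> {}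
   \<Longrightarrow> N (G - {g2}) \<inter> NE x \<noteq> {} \<Longrightarrow> g1 = g2"
proof (rule ccontr)
  assume a: "G \<in> H" "g1 \<in> G" "g2 \<in> G" "x \<in> E" "N (G - {g1}) \<inter> NE x \<noteq> {}"
   "N (G - {g2}) \<inter> NE x \<noteq> {}" "g1 \<noteq> g2"
  obtain p1 where p1: "p1 \<in> N (G - {g1})" "p1 \<in> NE x" using a by blast
  obtain p2 where p2: "p2 \<in> N (G - {g2})" "p2 \<in> NE x" using a by blast
  have pn: "p2 \<notin> G - {g2}" using N_notin sh_of a(1,3) p2(1) by blast
  have F: "insert p2 (G - {g2}) \<in> H" using p2(1) by (simp add: N_iff)
  have xF: "g1 \<in> insert p2 (G - {g2})" using a by blast
  have xq: "g1 \<noteq> p2" using pn a by blast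
  show False
    using KL[OF sh_of[OF a(1,2)] sh_of[OF EH a(4)] p1 F xF _ in_N[OF a(1,2)] p2(2) xq] by blast
qed

definition iota where "iota e = (SOME x. x \<in> E \<and> N e \<inter> NE x \<noteq> {})"

lemma iota: "e \<in> sh \<Longrightarrow> iota e \<in> E \<and> N e \<inter> NE (iota e) \<noteq> {}"
proof -
  assume "e \<in> sh"
  then have "\<exists>x. x \<in> E \<and> N e \<inter> NE x \<noteq> {}" using exists_meet by blast
  then show ?thesis unfolding iota_def by (rule someI_ex)
qed

lemma iota_bij: "G \<in> H \<Longrightarrow> bij_betw (\<lambda>g. iota (G - {g})) G E"
proof -
  assume G: "G \<in> H"
  have inj: "inj_on (\<lambda>g. iota (G - {g})) G"
  proof (rule inj_onI)
    fix g1 g2 assume g: "g1 \<in> G" "g2 \<in> G" "iota (G - {g1}) = iota (G - {g2})"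
    have "iota (G - {g1}) \<in> E" "N (G - {g1}) \<inter> NE (iota (G - {g1})) \<noteq> {}"
      "N (G - {g2}) \<inter> NE (iota (G - {g1})) \<noteq> {}"
      using iota[OF sh_of[OF G g(1)]] iota[OF sh_of[OF G g(2)]] g(3) by auto
    then show "g1 = g2" using claimD[OF G g(1,2)] by blast
  qed
  have sub: "(\<lambda>g. iota (G - {g})) ` G \<subseteq> E" using iota sh_of[OF G] by blast
  have "card ((\<lambda>g. iota (G - {g})) ` G) = card E"
    using card_image[OF inj] edges G EH by simp
  then have "(\<lambda>g. iota (G - {g})) ` G = E" using card_subset_eq finE[OF EH] sub by blast
  then show ?thesis using inj bij_betw_def by blast
qed

lemma claimC: "e \<in> sh \<Longrightarrow> e' \<in> sh \<Longrightarrow> x \<in> N e \<Longrightarrow> x \<in> N e' \<Longrightarrow> iota e' = iota e"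
proof -
  assume a: "e \<in> sh" "e' \<in> sh" "x \<in> N e" "x \<in> N e'"
  define i where "i = iota e"
  define G where "G = insert x e'"
  have GH: "G \<in> H" using a(4) G_def by (simp add: N_iff)
  have xn: "x \<notin> e'" using N_notin a(2,4) by blast
  have xG: "x \<in> G" "G - {x} = e'" using G_def xn by auto
  have "i \<in> E" using iota a(1) i_def by blast
  moreover have "(\<lambda>g. iota (G - {g})) ` G = E" using iota_bij[OF GH] unfolding bij_betw_def by blast
  ultimately obtain g where g: "g \<in> G" "iota (G - {g}) = i" by (metis (no_types, lifting) imageE)
  show ?thesis
  proof (cases "g = x")
    case True then show ?thesis using g xG i_def by simp
  next
    case False
    have "N (G - {g}) \<inter> NE i \<noteq> {}" using iota[OF sh_of[OF GH g(1)]] g(2) by simp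
    then obtain q where q: "q \<in> N (G - {g})" "q \<in> NE i" by blast
    have "N e \<inter> NE i \<noteq> {}" using iota[OF a(1)] i_def by simp
    then obtain p where p: "p \<in> N e" "p \<in> NE i" by blast
    have qn: "q \<notin> G - {g}" using N_notin sh_of GH g(1) q(1) by blast
    have F: "insert q (G - {g}) \<in> H" using q(1) by (simp add: N_iff)
    have xF: "x \<in> insert q (G - {g})" using False xG by blast
    have xq: "x \<noteq> q" using qn False xG by blast
    have "False"
      using KL[OF a(1) sh_of[OF EH \<open>i \<in> E\<close>] p F xF _ a(3) q(2) xq] by blast
    then show ?thesis ..
  qed
qed

lemma partite: "r_partite r V H"
proof -
  obtain h where h: "bij_betw h E {0..<r}"
    using ex_bij_betw_finite_nat[OF finE[OF EH]] edges[OF EH] by auto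
  define P where "P v = (if \<exists>e\<in>sh. v \<in> N e then h (iota (SOME e. e \<in> sh \<and> v \<in> N e)) else 0)" for v
  have Plt: "P v < r" for v
  proof (cases "\<exists>e\<in>sh. v \<in> N e")
    case True
    then have "\<exists>e. e \<in> sh \<and> v \<in> N e" by blast
    then have "(SOME e. e \<in> sh \<and> v \<in> N e) \<in> sh \<and> v \<in> N (SOME e. e \<in> sh \<and> v \<in> N e)" by (rule someI_ex)
    then have "(SOME e. e \<in> sh \<and> v \<in> N e) \<in> sh" by blast
    then have "iota (SOME e. e \<in> sh \<and> v \<in> N e) \<in> E" using iota by blast
    then show ?thesis using h True unfolding P_def bij_betw_def by auto
  next
    case False then show ?thesis using r3 P_def by simp
  qed
  have PF: "P v = h (iota (F - {v}))" if F: "F \<in> H" "v \<in> F" for F v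
  proof -
    have ex: "\<exists>e\<in>sh. v \<in> N e" using sh_of in_N F by blast
    define e0 where "e0 = (SOME e. e \<in> sh \<and> v \<in> N e)"
    have ex2: "\<exists>e. e \<in> sh \<and> v \<in> N e" using ex by blast
    have "e0 \<in> sh \<and> v \<in> N e0" unfolding e0_def using ex2 by (rule someI_ex)
    then have "iota e0 = iota (F - {v})" using claimC[of "F - {v}" e0 v] sh_of[OF F] in_N[OF F] by blast
    then show ?thesis using ex P_def e0_def by simp
  qed
  have "\<forall>F\<in>H. \<forall>i<r. card {v\<in>F. P v = i} = 1"
  proof (intro ballI allI impI)
    fix F i assume F: "F \<in> H" and i: "i < r"
    have bj: "bij_betw (\<lambda>v. h (iota (F - {v}))) F {0..<r}"
      using bij_betw_trans[OF iota_bij[OF F] h] by (simp add: comp_def)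
    then have "i \<in> (\<lambda>v. h (iota (F - {v}))) ` F" using i unfolding bij_betw_def by simp
    then obtain v where v: "v \<in> F" "h (iota (F - {v})) = i" by blast
    have "{w\<in>F. P w = i} = {v}"
    proof
      show "{v} \<subseteq> {w\<in>F. P w = i}" using v PF F by auto
      show "{w\<in>F. P w = i} \<subseteq> {v}"
      proof
        fix w assume "w \<in> {w\<in>F. P w = i}"
        then have "w \<in> F" "h (iota (F - {w})) = h (iota (F - {v}))" using PF F v by auto
        then show "w \<in> {v}" using bj v unfolding bij_betw_def inj_on_def by blast
      qed
    qed
    then show "card {v\<in>F. P v = i} = 1" by simp
  qed
  then show ?thesis unfolding r_partite_def using Plt by blast
qed

end

theorem theorem1p2:
  fixes r n :: nat and V :: "'a set" and H :: "'a set set"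
  assumes "r \<ge> 3"
    and "2 * real n \<ge> real (r - 1) * (2 * real r + 1)"
    and "r_graph r V H" and "card V = n"
    and "T_free r H"
    and "real (min_pos_codeg r V H) > 2 * real n / (2 * real r + 1)"
  shows "r_partite r V H"
proof (cases "H = {}")
  case True
  then show ?thesis unfolding r_partite_def using assms(1) by (intro exI[of _ "\<lambda>_. 0"]) auto
next
  case False
  then obtain E where EH: "E \<in> H" by blast
  define d where "d = min_pos_codeg r V H"
  have finV: "finite V" and edges: "\<And>E. E\<in>H \<Longrightarrow> E \<subseteq> V \<and> card E = r"
    using assms(3) unfolding r_graph_def by auto
  have "shadow r H \<subseteq> Pow V" unfolding shadow_def using edges by blast
  then have fsh: "finite (shadow r H)" using finV by (meson finite_Pow_iff finite_subset)
  have codeg: "card (nbhd V H e) \<ge> d" if "e \<in> shadow r H" for e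
    unfolding d_def min_pos_codeg_def using fsh that by (intro Min_le) auto
  have pos: "2 * real r + 1 > 0" by simp
  have "2 * real n / (2 * real r + 1) \<ge> real (r - 1)"
    using assms(2) pos by (simp add: field_simps)
  then have "real d > real (r - 1)" using assms(6) d_def by linarith
  then have dr: "d \<ge> r" using assms(1) by linarith
  have "real d * (2 * real r + 1) > 2 * real n" using assms(6) d_def pos by (simp add: field_simps)
  then have "real ((2*r+1)*d) > real (2*n)" by (simp add: algebra_simps)
  then have d2: "(2*r+1)*d > 2*n" by linarith
  interpret tset2 r n V H d E
    using assms(1,4,5) finV edges codeg dr d2 EH by unfold_locales auto
  show ?thesis by (rule partite)
qed

end
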